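(* Let $X$ be a positive random variable with $\mathbb E[X]<\infty$, and let $h>0$ satisfy $0<\mathbb P(X>h)<1$. Define $$\kappa_h=\frac{\mathbb E[X\mathbf 1_{X>h}]}{\mathbb E[X]}=\frac{\mathbb P(X>h)\,\mathbb E[X\mid X>h]}{\mathbb E[X]},$$ and, for $n\in\mathbb N$, $n\ge1$, and $X_1,X_2,\dots$ i.i.d. copies of $X$, $$\widehat\kappa_h(n)=\frac{\sum_{i=1}^n \mathbf 1_{X_i>h}X_i}{\sum_{i=1}^n X_i}.$$ Then for every $n\ge 1$, $$\mathbb E\big[\widehat\kappa_h(n)\big]<\kappa_h,$$ and $\widehat\kappa_h(n)\to\kappa_h$ almost surely and in probability as $n\to\infty$.
   Context: $\mathbf 1_{E}$ denotes the indicator of the event $E$. The threshold $h$ is fixed (not estimated from the sample). *)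

theory Defs
  imports "HOL-Probability.Probability"
begin

definition kappa :: "'a measure \<Rightarrow> ('a \<Rightarrow> real) \<Rightarrow> real \<Rightarrow> real" where
  "kappa M Y h = (\<integral>x. Y x * indicator {x\<in>space M. Y x > h} x \<partial>M) / (\<integral>x. Y x \<partial>M)"

definition kappa_hat :: "(nat \<Rightarrow> 'a \<Rightarrow> real) \<Rightarrow> real \<Rightarrow> nat \<Rightarrow> 'a \<Rightarrow> real" where
  "kappa_hat X h n \<omega> =
     (\<Sum>i=1..n. (if X i \<omega> > h then 1 else 0) * X i \<omega>) / (\<Sum>i=1..n. X i \<omega>)"

end

theory Submission
  imports Defs
begin

lemma geo_up:
  fixes a w :: real assumes a: "a > 1" and w: "w \<ge> 0"
  shows "(\<Sum>n<N. if a^n < w then a^n else 0) \<le> a*w/(a-1)"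
proof -
  obtain M where M: "w \<le> a^M" using real_arch_pow[OF a, of w] less_imp_le by blast
  define L where "L = (LEAST m. w \<le> a^m)"
  have L1: "w \<le> a^L" using LeastI[of "\<lambda>m. w \<le> a^m", OF M] L_def by simp
  have L2: "a^m < w" if "m < L" for m using not_less_Least[of m "\<lambda>m. w\<le>a^m"] L_def that by auto
  have ge: "w \<le> a^n" if "L \<le> n" for n using L1 power_increasing[OF that, of a] a by linarith
  have "(\<Sum>n<N. if a^n < w then a^n else 0) = (\<Sum>n<N. if n \<in> {..<L} then a^n else 0)"
    by (rule sum.cong) (auto dest: L2 ge simp: not_less)
  also have "\<dots> = (\<Sum>n\<in>{..<N}\<inter>{..<L}. a^n)"
    by (simp add: sum.inter_restrict)
  also have "\<dots> \<le> (\<Sum>n<L. a^n)"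
    by (rule sum_mono2) (use a in auto)
  also have "\<dots> = (a^L - 1)/(a-1)" using a by (simp add: geometric_sum)
  also have "\<dots> \<le> a*w/(a-1)"
  proof (cases L)
    case 0 then show ?thesis using a w by simp
  next
    case (Suc l)
    then have "a^l < w" using L2 by simp
    then have "a^L \<le> a*w" using Suc a by simp
    then show ?thesis using a by (intro divide_right_mono) auto
  qed
  finally show ?thesis .
qed

lemma geo_tail:
  fixes r :: real assumes r: "0 \<le> r" "r < 1"
  shows "(\<Sum>n<N. if L \<le> n then r^n else 0) \<le> r^L/(1-r)"
proof -
  have "(\<Sum>n<N. if L \<le> n then r^n else 0) = (if N \<le> L then 0 else (r^L - r^N)/(1-r))"
  proof (induction N)
    case 0 then show ?case by simp
  next
    case (Suc N)
    show ?case
    proof (cases "N < L")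
      case True then show ?thesis using Suc by auto
    next
      case False
      then have "N = L \<or> L < N" by auto
      then show ?thesis using Suc r by (auto simp: field_simps)
    qed
  qed
  also have "\<dots> \<le> r^L/(1-r)" using r by (auto intro!: divide_right_mono)
  finally show ?thesis .
qed

lemma geo_down:
  fixes a w :: real assumes a: "a > 1" and w: "w > 0"
  shows "(\<Sum>n<N. if w \<le> a^n then 1/a^n else 0) \<le> a/((a-1)*w)"
proof -
  obtain M where M: "w \<le> a^M" using real_arch_pow[OF a, of w] less_imp_le by blast
  define L where "L = (LEAST m. w \<le> a^m)"
  have L1: "w \<le> a^L" using LeastI[of "\<lambda>m. w \<le> a^m", OF M] L_def by simp
  have L2: "a^m < w" if "m < L" for m using not_less_Least[of m "\<lambda>m. w\<le>a^m"] L_def that by auto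
  have ge: "w \<le> a^n" if "L \<le> n" for n using L1 power_increasing[OF that, of a] a by linarith
  have iff: "w \<le> a^n \<longleftrightarrow> L \<le> n" for n using L2[of n] ge[of n] by (cases "n < L") auto
  have "(\<Sum>n<N. if w \<le> a^n then 1/a^n else 0) = (\<Sum>n<N. if L \<le> n then (1/a)^n else 0)"
    by (rule sum.cong) (auto simp: iff power_one_over)
  also have "\<dots> \<le> (1/a)^L/(1-1/a)" using a by (intro geo_tail) auto
  also have "\<dots> = a/((a-1)*a^L)" using a by (simp add: field_simps power_one_over)
  also have "\<dots> \<le> a/((a-1)*w)" using a w L1 by (intro divide_left_mono mult_left_mono) auto
  finally show ?thesis .
qed

definition kseq :: "real \<Rightarrow> nat \<Rightarrow> nat" where
  "kseq a n = nat \<lfloor>a^n\<rfloor>"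

lemma kseq_props:
  fixes a :: real assumes a: "a > 1"
  shows "1 \<le> kseq a n" "real (kseq a n) \<le> a^n" "a^n < real (kseq a n) + 1"
    "a^n \<le> 2 * real (kseq a n)"
proof -
  have p: "1 \<le> a^n" using a by simp
  show k1: "1 \<le> kseq a n" unfolding kseq_def using p
    by (metis le_nat_floor nat_one_as_int of_nat_1 one_le_floor)
  show "real (kseq a n) \<le> a^n" unfolding kseq_def using p by simp
  show lt: "a^n < real (kseq a n) + 1" unfolding kseq_def using p by linarith
  show "a^n \<le> 2 * real (kseq a n)" using lt k1 by linarith
qed

lemma kseq_mono:
  fixes a :: real assumes a: "a > 1" and "p \<le> q"
  shows "kseq a p \<le> kseq a q"
  unfolding kseq_def using power_increasing[OF assms(2), of a] a
  by (intro nat_mono floor_mono) auto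

lemma interp_one:
  fixes S :: "nat \<Rightarrow> real" and a \<mu> d :: real
  assumes mono: "\<And>m. S m \<le> S (Suc m)" and nn: "\<And>m. 0 \<le> S m"
    and a: "a > 1" and d: "d > 0"
    and lim: "(\<lambda>n. S (kseq a n) / kseq a n) \<longlonglongrightarrow> \<mu>"
  shows "eventually (\<lambda>m. S m / m \<le> a^2 * (\<mu> + d) \<and> (\<mu> - d) / a^2 \<le> S m / m) sequentially"
proof -
  let ?k = "kseq a"
  have Smono: "S p \<le> S q" if "p \<le> q" for p q
    using incseq_SucI[of S] mono that by (auto simp: incseq_def)
  obtain N1 where N1: "\<And>n. n \<ge> N1 \<Longrightarrow> \<bar>S (?k n) / ?k n - \<mu>\<bar> < d"
    using lim d unfolding LIMSEQ_def dist_real_def by blast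
  obtain N2 where N2: "a/(a-1) < a^N2" using real_arch_pow[OF a] by blast
  have N2': "a/(a-1) \<le> a^n" if "n \<ge> N2" for n
    using N2 power_increasing[OF that, of a] a by linarith
  define N where "N = max N1 N2"
  have ratio: "real (?k (Suc n)) \<le> a^2 * ?k n" if "n \<ge> N2" for n
  proof -
    have "a/(a-1) \<le> a^n" using N2' that .
    then have "a \<le> a^n * (a - 1)" using a by (simp add: field_simps)
    then have "a^n \<le> a * (a^n - 1)" by (simp add: algebra_simps)
    also have "\<dots> < a * ?k n" using kseq_props(3)[OF a, of n] a by simp
    finally have "a * a^n \<le> a^2 * ?k n" using a by (simp add: power2_eq_square)
    moreover have "real (?k (Suc n)) \<le> a * a^n" using kseq_props(2)[OF a, of "Suc n"] by simp
    ultimately show ?thesis by linarith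
  qed
  have "\<forall>m\<ge>?k N. S m / m \<le> a^2 * (\<mu> + d) \<and> (\<mu> - d) / a^2 \<le> S m / m"
  proof (intro allI impI)
    fix m assume m: "?k N \<le> m"
    have m1: "1 \<le> m" using m kseq_props(1)[OF a, of N] by linarith
    obtain p where p: "real m + 1 < a^p" using real_arch_pow[OF a] by blast
    then have "m < ?k p" using kseq_props(3)[OF a, of p] by linarith
    define q where "q = (LEAST p. m < ?k p)"
    have q1: "m < ?k q" using LeastI[of "\<lambda>p. m < ?k p", OF \<open>m < ?k p\<close>] q_def by simp
    have q2: "\<not> m < ?k r" if "r < q" for r using not_less_Least[of r "\<lambda>p. m < ?k p"] q_def that by simp
    have "N < q"
    proof (rule ccontr)
      assume "\<not> N < q"
      then have "?k q \<le> ?k N" using kseq_mono[OF a] by simp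
      then show False using q1 m by linarith
    qed
    then obtain n where qn: "q = Suc n" and nN: "N \<le> n" by (cases q) auto
    have kn: "?k n \<le> m" using q2[of n] qn by simp
    have kn1: "m < ?k (Suc n)" using q1 qn by simp
    have n1: "n \<ge> N1" "Suc n \<ge> N1" "n \<ge> N2" using nN N_def by auto
    have kpos: "0 < real (?k n)" "0 < real (?k (Suc n))" using kseq_props(1)[OF a] by (auto intro: less_le_trans)
    have r: "real (?k (Suc n)) \<le> a^2 * ?k n" using ratio n1(3) .
    have b1: "S (?k (Suc n)) / ?k (Suc n) < \<mu> + d" using N1[OF n1(2)] by linarith
    have b2: "\<mu> - d < S (?k n) / ?k n" using N1[OF n1(1)] by linarith
    have up: "S m / m \<le> a^2 * (\<mu> + d)"
    proof -
      have "0 \<le> S (?k (Suc n)) / ?k (Suc n)" using nn[of "?k (Suc n)"] by simp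
      then have md: "0 \<le> \<mu> + d" using b1 by linarith
      have "S m / m \<le> S (?k (Suc n)) / ?k n"
        using Smono[of m "?k (Suc n)"] kn1 kn kpos m1 nn[of m] nn[of "?k (Suc n)"]
        by (intro frac_le) auto
      also have "\<dots> = (S (?k (Suc n)) / ?k (Suc n)) * (?k (Suc n) / ?k n)"
        using kpos by (simp add: field_simps)
      also have "\<dots> \<le> (\<mu> + d) * a^2"
        using b1 r kpos md
        by (intro mult_mono) (auto simp: field_simps)
      finally show ?thesis by (simp add: mult.commute)
    qed
    have lo: "(\<mu> - d) / a^2 \<le> S m / m"
    proof (cases "\<mu> - d \<le> 0")
      case True
      then have "(\<mu> - d) / a^2 \<le> 0" using a by (simp add: divide_nonpos_pos)
      also have "0 \<le> S m / m" using nn[of m] by simp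
      finally show ?thesis .
    next
      case False
      have "(\<mu> - d) / a^2 \<le> (S (?k n) / ?k n) * (?k n / ?k (Suc n))"
      proof -
        have "(\<mu> - d) / a^2 = (\<mu> - d) * (1/a^2)" by simp
        also have "\<dots> \<le> (S (?k n) / ?k n) * (?k n / ?k (Suc n))"
          using b2 False r kpos a nn[of "?k n"] by (intro mult_mono) (auto simp: field_simps)
        finally show ?thesis .
      qed
      also have "\<dots> = S (?k n) / ?k (Suc n)" using kpos by (simp add: field_simps)
      also have "\<dots> \<le> S m / m"
        using Smono[of "?k n" m] kn kn1 kpos m1 nn[of "?k n"]
        by (intro frac_le) auto
      finally show ?thesis .
    qed
    show "S m / m \<le> a^2 * (\<mu> + d) \<and> (\<mu> - d) / a^2 \<le> S m / m" using up lo by simp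
  qed
  then show ?thesis unfolding eventually_sequentially by blast
qed

lemma interp:
  fixes S :: "nat \<Rightarrow> real" and \<mu> :: real
  assumes mono: "\<And>m. S m \<le> S (Suc m)" and nn: "\<And>m. 0 \<le> S m"
    and lim: "\<And>j::nat. (\<lambda>n. S (kseq (1 + 1/(j+1)) n) / kseq (1 + 1/(j+1)) n) \<longlonglongrightarrow> \<mu>"
  shows "(\<lambda>m. S m / m) \<longlonglongrightarrow> \<mu>"
proof (rule tendstoI)
  fix e :: real assume e: "e > 0"
  define al where "al j = 1 + 1/(real j+1)" for j :: nat
  have al1: "al j > 1" for j unfolding al_def by (simp add: add_pos_pos)
  have "(\<lambda>j. 1/(real j+1)) \<longlonglongrightarrow> 0"
    using LIMSEQ_Suc[OF lim_inverse_n'] by (simp add: add.commute)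
  then have alim: "al \<longlonglongrightarrow> 1" unfolding al_def using tendsto_add[of "\<lambda>_. 1" 1 sequentially] by force
  have d0: "(\<lambda>j. 1/(real j+1)) \<longlonglongrightarrow> 0" by fact
  have l1: "(\<lambda>j. (al j)^2 * (\<mu> + 1/(real j+1))) \<longlonglongrightarrow> 1^2 * (\<mu> + 0)"
    by (intro tendsto_intros alim d0)
  have l2: "(\<lambda>j. (\<mu> - 1/(real j+1)) / (al j)^2) \<longlonglongrightarrow> (\<mu> - 0) / 1^2"
    by (intro tendsto_intros alim d0) simp
  have "eventually (\<lambda>j. dist ((al j)^2 * (\<mu> + 1/(real j+1))) \<mu> < e) sequentially"
    using l1 e unfolding tendsto_iff by simp
  moreover have "eventually (\<lambda>j. dist ((\<mu> - 1/(real j+1)) / (al j)^2) \<mu> < e) sequentially"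
    using l2 e unfolding tendsto_iff by simp
  ultimately obtain j where j1: "dist ((al j)^2 * (\<mu> + 1/(real j+1))) \<mu> < e"
    and j2: "dist ((\<mu> - 1/(real j+1)) / (al j)^2) \<mu> < e"
    using eventually_conj eventually_sequentially by (metis (no_types, lifting) le_refl)
  have ev: "eventually (\<lambda>m. S m / m \<le> (al j)^2 * (\<mu> + 1/(real j+1)) \<and> (\<mu> - 1/(real j+1)) / (al j)^2 \<le> S m / m) sequentially"
    using lim[of j] by (intro interp_one[where S=S, OF mono nn al1[of j]]) (auto simp: al_def)
  show "eventually (\<lambda>m. dist (S m / m) \<mu> < e) sequentially"
    using ev by eventually_elim (use j1 j2 in \<open>auto simp: dist_real_def\<close>)
qed

lemma (in prob_space) cheb2:
  fixes Z :: "'a \<Rightarrow> real"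
  assumes Z[measurable]: "Z \<in> borel_measurable M" and int: "integrable M (\<lambda>x. Z x^2)" and c: "c > 0"
  shows "prob {x\<in>space M. c \<le> \<bar>Z x\<bar>} \<le> expectation (\<lambda>x. Z x^2) / c^2"
proof -
  let ?A = "{x\<in>space M. c \<le> \<bar>Z x\<bar>}"
  have A[measurable]: "?A \<in> sets M" by measurable
  have iA: "integrable M (indicat_real ?A)" using A by (intro integrable_real_indicator) (auto simp: less_top[symmetric])
  have "c^2 * prob ?A = expectation (\<lambda>x. c^2 * indicator ?A x)"
    using iA by simp
  also have "\<dots> \<le> expectation (\<lambda>x. Z x^2)"
  proof (rule integral_mono)
    show "integrable M (\<lambda>x. c^2 * indicator ?A x)" using iA by simp
    show "integrable M (\<lambda>x. Z x^2)" by fact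
    fix x assume x: "x \<in> space M"
    show "c^2 * indicator ?A x \<le> Z x^2"
    proof (cases "c \<le> \<bar>Z x\<bar>")
      case True
      then have "c^2 \<le> \<bar>Z x\<bar>^2" using c by (intro power_mono) auto
      then show ?thesis using True x by (simp add: indicator_def)
    qed (use x in \<open>auto simp: indicator_def\<close>)
  qed
  finally show ?thesis using c by (simp add: field_simps)
qed

lemma (in prob_space) indep_pair:
  fixes Z :: "'i \<Rightarrow> 'a \<Rightarrow> real"
  assumes ind: "indep_vars (\<lambda>_. borel) Z J" and ij: "i \<in> J" "j \<in> J" "i \<noteq> j"
  shows "indep_var borel (Z i) borel (Z j)"
proof -
  have "indep_var
    borel ((\<lambda>f. f i) \<circ> (\<lambda>\<omega>. restrict (\<lambda>i. Z i \<omega>) {i}))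
    borel ((\<lambda>f. f j) \<circ> (\<lambda>\<omega>. restrict (\<lambda>i. Z i \<omega>) {j}))"
    using ij by (intro indep_var_compose[OF indep_var_restrict[OF ind]]) auto
  also have "((\<lambda>f. f i) \<circ> (\<lambda>\<omega>. restrict (\<lambda>i. Z i \<omega>) {i})) = Z i" by auto
  also have "((\<lambda>f. f j) \<circ> (\<lambda>\<omega>. restrict (\<lambda>i. Z i \<omega>) {j})) = Z j" by auto
  finally show ?thesis .
qed

lemma (in prob_space) var_sum_indep:
  fixes Z :: "'i \<Rightarrow> 'a \<Rightarrow> real"
  assumes ind: "indep_vars (\<lambda>_. borel) Z J" and fin: "finite J"
    and bnd: "\<And>i x. i \<in> J \<Longrightarrow> x \<in> space M \<Longrightarrow> \<bar>Z i x\<bar> \<le> B"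
    and mean: "\<And>i. i \<in> J \<Longrightarrow> expectation (Z i) = m"
  shows "expectation (\<lambda>x. (\<Sum>i\<in>J. Z i x - m)^2) = (\<Sum>i\<in>J. expectation (\<lambda>x. (Z i x - m)^2))"
    and "integrable M (\<lambda>x. (\<Sum>i\<in>J. Z i x - m)^2)"
proof -
  have meas[measurable]: "Z i \<in> borel_measurable M" if "i \<in> J" for i
    using ind that by (auto simp: indep_vars_def)
  have intZ: "integrable M (Z i)" if "i \<in> J" for i
    using that bnd by (intro integrable_const_bound[where B=B]) auto
  have intP: "integrable M (\<lambda>x. (Z i x - m) * (Z j x - m))" if "i \<in> J" "j \<in> J" for i j
  proof (rule integrable_const_bound[where B="(B + \<bar>m\<bar>)*(B + \<bar>m\<bar>)"])
    show "AE x in M. norm ((Z i x - m) * (Z j x - m)) \<le> (B + \<bar>m\<bar>)*(B + \<bar>m\<bar>)"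
    proof (rule AE_I2)
      fix x assume x: "x \<in> space M"
      have "\<bar>Z i x - m\<bar> \<le> B + \<bar>m\<bar>" "\<bar>Z j x - m\<bar> \<le> B + \<bar>m\<bar>" using bnd[OF _ x] that by force+
      then show "norm ((Z i x - m) * (Z j x - m)) \<le> (B + \<bar>m\<bar>)*(B + \<bar>m\<bar>)"
        by (simp add: abs_mult mult_mono)
    qed
  qed (use that in auto)
  have sq: "(\<Sum>i\<in>J. Z i x - m)^2 = (\<Sum>i\<in>J. \<Sum>j\<in>J. (Z i x - m) * (Z j x - m))" for x
    by (simp add: power2_eq_square sum_product)
  show "integrable M (\<lambda>x. (\<Sum>i\<in>J. Z i x - m)^2)"
    unfolding sq by (auto intro!: integrable_sum intP)
  have cross: "expectation (\<lambda>x. (Z i x - m) * (Z j x - m)) = (if i = j then expectation (\<lambda>x. (Z i x - m)^2) else 0)"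
    if "i \<in> J" "j \<in> J" for i j
  proof (cases "i = j")
    case True then show ?thesis by (simp add: power2_eq_square)
  next
    case False
    have "indep_var borel ((\<lambda>z. z - m) \<circ> Z i) borel ((\<lambda>z. z - m) \<circ> Z j)"
      by (rule indep_var_compose[OF indep_pair[OF ind that False]]) auto
    then have iv: "indep_var borel (\<lambda>x. Z i x - m) borel (\<lambda>x. Z j x - m)" by (simp add: comp_def)
    have "expectation (\<lambda>x. (Z i x - m) * (Z j x - m)) = expectation (\<lambda>x. Z i x - m) * expectation (\<lambda>x. Z j x - m)"
      using that intZ by (intro indep_var_lebesgue_integral[OF iv]) auto
    also have "expectation (\<lambda>x. Z i x - m) = 0" using that intZ mean by (simp add: prob_space)
    finally show ?thesis using False by simp
  qed
  have "expectation (\<lambda>x. (\<Sum>i\<in>J. Z i x - m)^2) = (\<Sum>i\<in>J. \<Sum>j\<in>J. expectation (\<lambda>x. (Z i x - m) * (Z j x - m)))"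
    unfolding sq using intP by (simp add: integrable_sum)
  also have "\<dots> = (\<Sum>i\<in>J. \<Sum>j\<in>J. (if i = j then expectation (\<lambda>x. (Z i x - m)^2) else 0))"
    using cross by (intro sum.cong) auto
  also have "\<dots> = (\<Sum>i\<in>J. expectation (\<lambda>x. (Z i x - m)^2))"
    using fin by (simp add: sum.delta)
  finally show "expectation (\<lambda>x. (\<Sum>i\<in>J. Z i x - m)^2) = (\<Sum>i\<in>J. expectation (\<lambda>x. (Z i x - m)^2))" .
qed

definition tr :: "real \<Rightarrow> real \<Rightarrow> real" where
  "tr c w = (if w \<le> c then w else 0)"

lemma tr_meas[measurable]: "(\<lambda>x. tr c (f x)) \<in> borel_measurable M" if [measurable]: "f \<in> borel_measurable M"
  unfolding tr_def by measurable

locale nn_iid = prob_space +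
  fixes W :: "nat \<Rightarrow> 'a \<Rightarrow> real" and W0 :: "'a \<Rightarrow> real"
  assumes indep: "indep_vars (\<lambda>_. borel) W {1..}"
    and W0_meas[measurable]: "W0 \<in> borel_measurable M"
    and nonneg: "\<And>i x. x \<in> space M \<Longrightarrow> 0 \<le> W i x"
    and W0_nonneg: "\<And>x. x \<in> space M \<Longrightarrow> 0 \<le> W0 x"
    and dist: "\<And>i. i \<ge> 1 \<Longrightarrow> distr M borel (W i) = distr M borel W0"
    and int: "integrable M W0"
begin

lemma W_meas[measurable]: "i \<ge> 1 \<Longrightarrow> W i \<in> borel_measurable M"
  using indep by (auto simp: indep_vars_def)

lemma transfer_int:
  fixes g :: "real \<Rightarrow> real"
  assumes i: "i \<ge> 1" and g[measurable]: "g \<in> borel_measurable borel"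
  shows "expectation (\<lambda>x. g (W i x)) = expectation (\<lambda>x. g (W0 x))"
proof -
  have "expectation (\<lambda>x. g (W i x)) = integral\<^sup>L (distr M borel (W i)) g"
    by (rule integral_distr[OF W_meas[OF i] g, symmetric])
  also have "\<dots> = integral\<^sup>L (distr M borel W0) g" using dist[OF i] by simp
  also have "\<dots> = expectation (\<lambda>x. g (W0 x))" by (rule integral_distr[OF W0_meas g])
  finally show ?thesis .
qed

lemma transfer_prob:
  assumes i: "i \<ge> 1" and B[measurable]: "B \<in> sets borel"
  shows "prob {x\<in>space M. W i x \<in> B} = prob {x\<in>space M. W0 x \<in> B}"
proof -
  have "prob {x\<in>space M. W i x \<in> B} = measure (distr M borel (W i)) B"
    using i by (subst measure_distr) (auto simp: vimage_def Int_def conj_commute)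
  also have "\<dots> = measure (distr M borel W0) B" using dist[OF i] by simp
  also have "\<dots> = prob {x\<in>space M. W0 x \<in> B}"
    by (subst measure_distr) (auto simp: vimage_def Int_def conj_commute)
  finally show ?thesis .
qed

lemma prob_gt_eq: "prob {x\<in>space M. c < W0 x} = expectation (\<lambda>x. indicator {c<..} (W0 x) :: real)"
proof -
  have "expectation (\<lambda>x. indicator {c<..} (W0 x) :: real) = expectation (indicator {x\<in>space M. c < W0 x} :: _ \<Rightarrow> real)"
    by (rule Bochner_Integration.integral_cong) (auto simp: indicator_def)
  also have "\<dots> = prob {x\<in>space M. c < W0 x}" by (simp add: Int_absorb2 subset_iff)
  finally show ?thesis by simp
qed

lemma tr_bound: "0 \<le> w \<Longrightarrow> 0 \<le> c \<Longrightarrow> \<bar>tr c w\<bar> \<le> c"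
  unfolding tr_def by auto

lemma tr_nonneg: "0 \<le> w \<Longrightarrow> 0 \<le> tr c w"
  unfolding tr_def by auto

lemma subseq_part1:
  fixes a :: real assumes a: "a > 1"
  shows "AE x in M. eventually (\<lambda>n. \<forall>i\<in>{1..kseq a n}. W i x \<le> kseq a n) sequentially"
proof -
  let ?k = "kseq a"
  define B where "B n = (\<Union>i\<in>{1..?k n}. {x\<in>space M. real (?k n) < W i x})" for n
  have Bs[measurable]: "B n \<in> sets M" for n
    unfolding B_def by (intro sets.finite_UN) auto
  define g where "g n = real (?k n) * prob {x\<in>space M. real (?k n) < W0 x}" for n
  have PB: "prob (B n) \<le> g n" for n
  proof -
    have "prob (B n) \<le> (\<Sum>i\<in>{1..?k n}. prob {x\<in>space M. real (?k n) < W i x})"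
      unfolding B_def by (intro finite_measure_subadditive_finite) auto
    also have "\<dots> = (\<Sum>i\<in>{1..?k n}. prob {x\<in>space M. real (?k n) < W0 x})"
    proof (intro sum.cong refl)
      fix i assume "i \<in> {1..?k n}"
      then show "prob {x\<in>space M. real (?k n) < W i x} = prob {x\<in>space M. real (?k n) < W0 x}"
        using transfer_prob[of i "{real (?k n)<..}"] by simp
    qed
    also have "\<dots> = g n" by (simp add: g_def)
    finally show ?thesis .
  qed
  have gsum: "summable g"
  proof (rule summableI_nonneg_bounded)
    show "0 \<le> g n" for n by (simp add: g_def)
    fix N
    have ig: "integrable M (\<lambda>x. real (?k n) * indicator {real (?k n)<..} (W0 x) :: real)" for n
      by (intro integrable_const_bound[where B="real (?k n)"]) (auto simp: indicator_def)
    have "(\<Sum>n<N. g n) = (\<Sum>n<N. expectation (\<lambda>x. real (?k n) * indicator {real (?k n)<..} (W0 x)))"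
      by (simp add: g_def prob_gt_eq)
    also have "\<dots> = expectation (\<lambda>x. \<Sum>n<N. real (?k n) * indicator {real (?k n)<..} (W0 x))"
      by (rule Bochner_Integration.integral_sum[where f="\<lambda>n x. real (?k n) * indicator {real (?k n)<..} (W0 x)", symmetric]) (use ig in auto)
    also have "\<dots> \<le> expectation (\<lambda>x. a * (2 * W0 x) / (a - 1))"
    proof (rule integral_mono)
      show "integrable M (\<lambda>x. \<Sum>n<N. real (?k n) * indicator {real (?k n)<..} (W0 x))"
        by (rule Bochner_Integration.integrable_sum[where f="\<lambda>n x. real (?k n) * indicator {real (?k n)<..} (W0 x)"]) (use ig in auto)
      show "integrable M (\<lambda>x. a * (2 * W0 x) / (a - 1))" using int by auto
      fix x assume x: "x \<in> space M"
      have "(\<Sum>n<N. real (?k n) * indicator {real (?k n)<..} (W0 x)) \<le> (\<Sum>n<N. if a^n < 2 * W0 x then a^n else 0)"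
      proof (rule sum_mono)
        fix n
        show "real (?k n) * indicator {real (?k n)<..} (W0 x) \<le> (if a^n < 2 * W0 x then a^n else 0)"
          using kseq_props[OF a, of n] a by (auto simp: indicator_def)
      qed
      also have "\<dots> \<le> a * (2 * W0 x) / (a - 1)"
        using W0_nonneg[OF x] by (intro geo_up a) auto
      finally show "(\<Sum>n<N. real (?k n) * indicator {real (?k n)<..} (W0 x)) \<le> a * (2 * W0 x) / (a - 1)" .
    qed
    finally show "(\<Sum>n<N. g n) \<le> expectation (\<lambda>x. a * (2 * W0 x) / (a - 1))" .
  qed
  have "summable (\<lambda>n. prob (B n))"
    by (rule summable_comparison_test'[OF gsum, of 0]) (use PB in auto)
  then have "AE x in M. eventually (\<lambda>n. x \<in> space M - B n) sequentially"
    by (intro borel_cantelli_AE1) (auto simp: less_top[symmetric])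
  then show ?thesis
    by (rule AE_mp) (auto intro!: AE_I2 elim!: eventually_mono simp: B_def not_less)
qed


lemma subseq_part2:
  fixes a :: real assumes a: "a > 1"
  shows "AE x in M. (\<lambda>n. (\<Sum>i\<in>{1..kseq a n}. tr (kseq a n) (W i x)) / kseq a n
            - expectation (\<lambda>x. tr (kseq a n) (W0 x))) \<longlonglongrightarrow> 0"
proof -
  let ?k = "kseq a"
  define m where "m n = expectation (\<lambda>x. tr (?k n) (W0 x))" for n
  define U where "U n x = (\<Sum>i\<in>{1..?k n}. tr (?k n) (W i x))" for n x
  define q where "q n = expectation (\<lambda>x. (tr (?k n) (W0 x))^2)" for n
  have kp: "0 < real (?k n)" for n using kseq_props(1)[OF a, of n] by simp
  have Umeas[measurable]: "(\<lambda>x. U n x) \<in> borel_measurable M" for n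
    unfolding U_def by (intro borel_measurable_sum tr_meas W_meas) auto
  have var: "integrable M (\<lambda>x. (U n x - ?k n * m n)^2) \<and> expectation (\<lambda>x. (U n x - ?k n * m n)^2) \<le> ?k n * q n" for n
  proof -
    define Z where "Z i x = tr (?k n) (W i x)" for i x
    have ind: "indep_vars (\<lambda>_. borel) Z {1..?k n}"
      unfolding Z_def
      by (rule indep_vars_compose2[where Y="\<lambda>_. tr (?k n)", OF indep_vars_subset[OF indep]])
         (auto simp: tr_def)
    have Zm[measurable]: "i \<in> {1..?k n} \<Longrightarrow> Z i \<in> borel_measurable M" for i
      unfolding Z_def by (intro tr_meas W_meas) auto
    have bnd: "\<bar>Z i x\<bar> \<le> ?k n" if "x \<in> space M" for i x
      unfolding Z_def using nonneg[OF that] by (intro tr_bound) auto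
    have mean: "expectation (Z i) = m n" if "i \<in> {1..?k n}" for i
      unfolding Z_def m_def using that by (intro transfer_int) (auto simp: tr_def)
    have vs: "expectation (\<lambda>x. (\<Sum>i\<in>{1..?k n}. Z i x - m n)^2) = (\<Sum>i\<in>{1..?k n}. expectation (\<lambda>x. (Z i x - m n)^2))"
       "integrable M (\<lambda>x. (\<Sum>i\<in>{1..?k n}. Z i x - m n)^2)"
      using var_sum_indep[OF ind _ bnd mean] by auto
    have eqs: "(\<Sum>i\<in>{1..?k n}. Z i x - m n) = U n x - ?k n * m n" for x
      by (simp add: sum_subtractf U_def Z_def)
    have each: "expectation (\<lambda>x. (Z i x - m n)^2) \<le> q n" if i: "i \<in> {1..?k n}" for i
    proof -
      have iZ: "integrable M (Z i)" using bnd i by (intro integrable_const_bound[where B="?k n"]) auto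
      have sqb: "(Z i x)^2 \<le> (?k n)^2" if x: "x \<in> space M" for x
        using power_mono[OF bnd[OF x, of i], of 2] by simp
      have iZ2: "integrable M (\<lambda>x. (Z i x)^2)" using sqb i
        by (intro integrable_const_bound[where B="?k n ^2"] AE_I2) auto
      have "expectation (\<lambda>x. (Z i x - m n)^2) = expectation (\<lambda>x. (Z i x)^2) - (expectation (Z i))^2"
        using variance_eq[OF iZ iZ2] mean[OF i] by simp
      also have "\<dots> \<le> expectation (\<lambda>x. (Z i x)^2)" by simp
      also have "\<dots> = q n" unfolding Z_def q_def using i
        by (intro transfer_int[where g="\<lambda>w. (tr (?k n) w)^2"]) (auto simp: tr_def)
      finally show ?thesis .
    qed
    have "expectation (\<lambda>x. (U n x - ?k n * m n)^2) = (\<Sum>i\<in>{1..?k n}. expectation (\<lambda>x. (Z i x - m n)^2))"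
      using vs(1) unfolding eqs .
    also have "\<dots> \<le> (\<Sum>i\<in>{1..?k n}. q n)" by (rule sum_mono) (rule each)
    finally have "expectation (\<lambda>x. (U n x - ?k n * m n)^2) \<le> ?k n * q n" by simp
    then show ?thesis using vs(2) unfolding eqs by simp
  qed
  have ch: "prob {x\<in>space M. e * ?k n \<le> \<bar>U n x - ?k n * m n\<bar>} \<le> q n / ?k n / e^2" if e: "e > 0" for e :: real and n
  proof -
    have "prob {x\<in>space M. e * ?k n \<le> \<bar>U n x - ?k n * m n\<bar>} \<le> expectation (\<lambda>x. (U n x - ?k n * m n)^2) / (e * ?k n)^2"
      using var[of n] e kp[of n] by (intro cheb2) auto
    also have "\<dots> \<le> (?k n * q n) / (e * ?k n)^2"
      using var[of n] by (intro divide_right_mono) auto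
    also have "\<dots> = q n / ?k n / e^2" using kp[of n] e by (simp add: field_simps power2_eq_square)
    finally show ?thesis .
  qed
  have qsum: "summable (\<lambda>n. q n / ?k n)"
  proof (rule summableI_nonneg_bounded)
    show "0 \<le> q n / ?k n" for n unfolding q_def by simp
    fix N
    have ig: "integrable M (\<lambda>x. (tr (?k n) (W0 x))^2 / ?k n)" for n
      by (intro integrable_const_bound[where B="(real (?k n))^2 / ?k n"])
         (auto simp: tr_def W0_nonneg abs_le_square_iff power_mono intro!: divide_right_mono)
    have "(\<Sum>n<N. q n / ?k n) = (\<Sum>n<N. expectation (\<lambda>x. (tr (?k n) (W0 x))^2 / ?k n))"
      by (simp add: q_def)
    also have "\<dots> = expectation (\<lambda>x. \<Sum>n<N. (tr (?k n) (W0 x))^2 / ?k n)"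
      by (rule Bochner_Integration.integral_sum[where f="\<lambda>n x. (tr (?k n) (W0 x))^2 / ?k n", symmetric]) (use ig in auto)
    also have "\<dots> \<le> expectation (\<lambda>x. 2 * (a / (a - 1)) * W0 x)"
    proof (rule integral_mono)
      show "integrable M (\<lambda>x. \<Sum>n<N. (tr (?k n) (W0 x))^2 / ?k n)"
        by (rule Bochner_Integration.integrable_sum[where f="\<lambda>n x. (tr (?k n) (W0 x))^2 / ?k n"]) (use ig in auto)
      show "integrable M (\<lambda>x. 2 * (a / (a - 1)) * W0 x)" using int by auto
      fix x assume x: "x \<in> space M"
      define w where "w = W0 x"
      have w0: "0 \<le> w" using W0_nonneg[OF x] w_def by simp
      show "(\<Sum>n<N. (tr (?k n) (W0 x))^2 / ?k n) \<le> 2 * (a / (a - 1)) * W0 x"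
      proof (cases "w = 0")
        case True then show ?thesis by (simp add: w_def tr_def)
      next
        case False
        then have wp: "0 < w" using w0 by simp
        have "(\<Sum>n<N. (tr (?k n) w)^2 / ?k n) \<le> (\<Sum>n<N. 2 * w^2 * (if w \<le> a^n then 1/a^n else 0))"
        proof (rule sum_mono)
          fix n
          have k2: "a^n \<le> 2 * ?k n" "real (?k n) \<le> a^n" using kseq_props[OF a, of n] by auto
          show "(tr (?k n) w)^2 / ?k n \<le> 2 * w^2 * (if w \<le> a^n then 1/a^n else 0)"
          proof (cases "w \<le> ?k n")
            case True
            then have "w \<le> a^n" using k2 by linarith
            moreover have "w^2 / ?k n \<le> 2 * w^2 * (1/a^n)"
            proof -
              have "w^2 / ?k n = (2*w^2) / (2 * ?k n)" by simp
              also have "\<dots> \<le> (2*w^2) / a^n"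
                using k2 a kp[of n] by (intro divide_left_mono) auto
              finally show ?thesis by simp
            qed
            ultimately show ?thesis using True by (simp add: tr_def)
          next
            case False
            then show ?thesis using wp by (simp add: tr_def)
          qed
        qed
        also have "\<dots> = 2 * w^2 * (\<Sum>n<N. (if w \<le> a^n then 1/a^n else 0))"
          by (simp add: sum_distrib_left)
        also have "\<dots> \<le> 2 * w^2 * (a / ((a - 1) * w))"
          by (intro mult_left_mono geo_down a wp) auto
        also have "\<dots> = 2 * (a / (a - 1)) * w" using wp a by (simp add: field_simps power2_eq_square)
        finally show ?thesis by (simp add: w_def)
      qed
    qed
    finally show "(\<Sum>n<N. q n / ?k n) \<le> expectation (\<lambda>x. 2 * (a / (a - 1)) * W0 x)" .
  qed
  have AEj: "AE x in M. \<forall>j::nat. eventually (\<lambda>n. \<bar>U n x - ?k n * m n\<bar> < (1/(real j+1)) * ?k n) sequentially"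
  proof (subst AE_all_countable, intro allI)
    fix j :: nat
    define e where "e = 1/(real j+1)"
    have e: "e > 0" unfolding e_def by simp
    define A where "A n = {x\<in>space M. e * ?k n \<le> \<bar>U n x - ?k n * m n\<bar>}" for n
    have As[measurable]: "A n \<in> sets M" for n unfolding A_def by measurable
    have "summable (\<lambda>n. (1/e^2) * (q n / ?k n))" by (intro summable_mult qsum)
    then have "summable (\<lambda>n. prob (A n))"
    proof (rule summable_comparison_test'[of _ 0])
      fix n :: nat
      have eq: "q n / ?k n / e^2 = (1/e^2) * (q n / ?k n)" by simp
      show "norm (prob (A n)) \<le> (1/e^2) * (q n / ?k n)"
        using ch[OF e, of n] unfolding eq A_def by simp
    qed
    then have "AE x in M. eventually (\<lambda>n. x \<in> space M - A n) sequentially"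
      by (intro borel_cantelli_AE1) (auto simp: less_top[symmetric])
    then show "AE x in M. eventually (\<lambda>n. \<bar>U n x - ?k n * m n\<bar> < (1/(real j+1)) * ?k n) sequentially"
      by (rule AE_mp) (auto intro!: AE_I2 elim!: eventually_mono simp: A_def e_def not_le)
  qed
  have "AE x in M. (\<lambda>n. (\<Sum>i\<in>{1..?k n}. tr (?k n) (W i x)) / ?k n - m n) \<longlonglongrightarrow> 0"
  proof (rule AE_mp[OF AEj], intro AE_I2 impI)
    fix x assume H: "\<forall>j::nat. eventually (\<lambda>n. \<bar>U n x - ?k n * m n\<bar> < (1/(real j+1)) * ?k n) sequentially"
    show "(\<lambda>n. (\<Sum>i\<in>{1..?k n}. tr (?k n) (W i x)) / ?k n - m n) \<longlonglongrightarrow> 0"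
    proof (rule tendstoI)
      fix e :: real assume e: "e > 0"
      obtain j :: nat where j0: "inverse (real (Suc j)) < e"
        using reals_Archimedean[OF e] by blast
      have j: "1/(real j+1) < e" using j0 by (simp add: inverse_eq_divide add.commute)
      show "eventually (\<lambda>n. dist ((\<Sum>i\<in>{1..?k n}. tr (?k n) (W i x)) / ?k n - m n) 0 < e) sequentially"
        using H[rule_format, of j]
      proof eventually_elim
        case (elim n)
        have "U n x / ?k n - m n = (U n x - ?k n * m n) / ?k n"
          using kp[of n] by (simp add: diff_divide_distrib)
        then have "\<bar>U n x / ?k n - m n\<bar> = \<bar>U n x - ?k n * m n\<bar> / ?k n"
          using kp[of n] by simp
        also have "\<dots> < 1/(real j+1)" using elim kp[of n] by (simp add: pos_divide_less_eq)
        finally show ?case using j by (simp add: dist_real_def U_def)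
      qed
    qed
  qed
  then show ?thesis unfolding m_def .
qed


lemma kseq_large:
  fixes a :: real assumes a: "a > 1"
  shows "eventually (\<lambda>n. w < real (kseq a n)) sequentially"
proof -
  obtain N where N: "w + 1 < a^N" using real_arch_pow[OF a] by blast
  have "w < real (kseq a n)" if "n \<ge> N" for n
  proof -
    have "a^N \<le> a^n" using power_increasing[OF that, of a] a by simp
    then show ?thesis using N kseq_props(3)[OF a, of n] by linarith
  qed
  then show ?thesis unfolding eventually_sequentially by blast
qed

lemma mconv:
  fixes a :: real assumes a: "a > 1"
  shows "(\<lambda>n. expectation (\<lambda>x. tr (kseq a n) (W0 x))) \<longlonglongrightarrow> expectation W0"
proof (rule integral_dominated_convergence[where w=W0])
  show "AE x in M. (\<lambda>n. tr (kseq a n) (W0 x)) \<longlonglongrightarrow> W0 x"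
  proof (rule AE_I2)
    fix x assume x: "x \<in> space M"
    show "(\<lambda>n. tr (kseq a n) (W0 x)) \<longlonglongrightarrow> W0 x"
      by (rule tendsto_eventually) (use kseq_large[OF a, of "W0 x"] in \<open>auto elim!: eventually_mono simp: tr_def\<close>)
  qed
  show "AE x in M. norm (tr (kseq a n) (W0 x)) \<le> W0 x" for n
    by (rule AE_I2) (auto simp: tr_def W0_nonneg)
qed (auto simp: int)

lemma subseq:
  fixes a :: real assumes a: "a > 1"
  shows "AE x in M. (\<lambda>n. (\<Sum>i=1..kseq a n. W i x) / kseq a n) \<longlonglongrightarrow> expectation W0"
  using subseq_part1[OF a] subseq_part2[OF a]
proof (eventually_elim)
  case (elim x)
  let ?m = "\<lambda>n. expectation (\<lambda>x. tr (kseq a n) (W0 x))"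
  have "eventually (\<lambda>n. (\<Sum>i\<in>{1..kseq a n}. tr (kseq a n) (W i x)) / kseq a n - ?m n
          = (\<Sum>i=1..kseq a n. W i x) / kseq a n - ?m n) sequentially"
    using elim(1) by eventually_elim (auto intro!: sum.cong simp: tr_def)
  then have "(\<lambda>n. (\<Sum>i=1..kseq a n. W i x) / kseq a n - ?m n) \<longlonglongrightarrow> 0"
    using elim(2) by (rule Lim_transform_eventually[rotated])
  then have "(\<lambda>n. ((\<Sum>i=1..kseq a n. W i x) / kseq a n - ?m n) + ?m n) \<longlonglongrightarrow> 0 + expectation W0"
    by (intro tendsto_add mconv[OF a])
  then show ?case by simp
qed

theorem slln:
  "AE x in M. (\<lambda>n. (\<Sum>i=1..n. W i x) / n) \<longlonglongrightarrow> expectation W0"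
proof -
  have "AE x in M. \<forall>j::nat. (\<lambda>n. (\<Sum>i=1..kseq (1 + 1/(real j+1)) n. W i x) / kseq (1 + 1/(real j+1)) n) \<longlonglongrightarrow> expectation W0"
  proof (subst AE_all_countable, intro allI)
    fix j :: nat
    have "1 < 1 + 1/(real j+1)" by (simp add: add_pos_pos)
    then show "AE x in M. (\<lambda>n. (\<Sum>i=1..kseq (1 + 1/(real j+1)) n. W i x) / kseq (1 + 1/(real j+1)) n) \<longlonglongrightarrow> expectation W0"
      by (rule subseq)
  qed
  then show ?thesis
  proof (rule AE_mp, intro AE_I2 impI)
    fix x assume x: "x \<in> space M"
      and H: "\<forall>j::nat. (\<lambda>n. (\<Sum>i=1..kseq (1 + 1/(real j+1)) n. W i x) / kseq (1 + 1/(real j+1)) n) \<longlonglongrightarrow> expectation W0"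
    show "(\<lambda>n. (\<Sum>i=1..n. W i x) / n) \<longlonglongrightarrow> expectation W0"
    proof (rule interp[where S="\<lambda>m. \<Sum>i=1..m. W i x"])
      show "(\<Sum>i=1..m. W i x) \<le> (\<Sum>i=1..Suc m. W i x)" for m
        using nonneg[OF x, of "Suc m"] by (simp add: sum.cl_ivl_Suc)
      show "0 \<le> (\<Sum>i=1..m. W i x)" for m
        using nonneg[OF x] by (intro sum_nonneg) auto
      show "(\<lambda>n. (\<Sum>i=1..kseq (1 + 1/(real j+1)) n. W i x) / kseq (1 + 1/(real j+1)) n) \<longlonglongrightarrow> expectation W0" for j
        using H by simp
    qed
  qed
qed

end

lemma distr_comp_eq:
  assumes [measurable]: "X \<in> borel_measurable M" "Y \<in> borel_measurable M" "f \<in> borel_measurable borel"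
    and d: "distr M borel X = distr M borel Y"
  shows "distr M borel (\<lambda>x. f (X x)) = distr M borel (\<lambda>x. f (Y x))"
proof -
  have "distr M borel (\<lambda>x. f (X x)) = distr (distr M borel X) borel f"
    by (subst distr_distr) (auto simp: comp_def)
  also have "\<dots> = distr (distr M borel Y) borel f" using d by simp
  also have "\<dots> = distr M borel (\<lambda>x. f (Y x))"
    by (subst distr_distr) (auto simp: comp_def)
  finally show ?thesis .
qed

lemma int_eq_distr:
  fixes f :: "real \<Rightarrow> real"
  assumes [measurable]: "X \<in> borel_measurable M" "Y \<in> borel_measurable M" "f \<in> borel_measurable borel"
    and d: "distr M borel X = distr M borel Y"
  shows "integral\<^sup>L M (\<lambda>x. f (X x)) = integral\<^sup>L M (\<lambda>x. f (Y x))"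
    and "integrable M (\<lambda>x. f (X x)) \<longleftrightarrow> integrable M (\<lambda>x. f (Y x))"
proof -
  have "integral\<^sup>L M (\<lambda>x. f (X x)) = integral\<^sup>L (distr M borel X) f"
    by (rule integral_distr[symmetric]) auto
  also have "\<dots> = integral\<^sup>L (distr M borel Y) f" using d by simp
  also have "\<dots> = integral\<^sup>L M (\<lambda>x. f (Y x))" by (rule integral_distr) auto
  finally show "integral\<^sup>L M (\<lambda>x. f (X x)) = integral\<^sup>L M (\<lambda>x. f (Y x))" .
  have "integrable M (\<lambda>x. f (X x)) \<longleftrightarrow> integrable (distr M borel X) f"
    by (rule integrable_distr_eq[symmetric]) auto
  also have "\<dots> \<longleftrightarrow> integrable (distr M borel Y) f" using d by simp
  also have "\<dots> \<longleftrightarrow> integrable M (\<lambda>x. f (Y x))" by (rule integrable_distr_eq) auto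
  finally show "integrable M (\<lambda>x. f (X x)) \<longleftrightarrow> integrable M (\<lambda>x. f (Y x))" .
qed

lemma AE_eq_distr:
  assumes [measurable]: "X \<in> borel_measurable M" "Y \<in> borel_measurable M" "{x\<in>space borel. P x} \<in> sets borel"
    and d: "distr M borel X = distr M borel Y"
    and ae: "AE x in M. P (Y x)"
  shows "AE x in M. P (X x)"
proof -
  have "AE x in distr M borel X. P x" unfolding d using ae by (subst AE_distr_iff) auto
  then show ?thesis by (subst (asm) AE_distr_iff) auto
qed

lemma kappa_hat_meas:
  assumes "\<And>i. i \<ge> 1 \<Longrightarrow> X i \<in> borel_measurable M"
  shows "kappa_hat X h n \<in> borel_measurable M"
proof -
  have [measurable]: "(\<lambda>x. \<Sum>i\<in>{1..n}. (if X i x > h then 1 else 0) * X i x) \<in> borel_measurable M"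
    by (intro borel_measurable_sum) (use assms in auto)
  have [measurable]: "(\<lambda>x. \<Sum>i\<in>{1..n}. X i x) \<in> borel_measurable M"
    by (intro borel_measurable_sum) (use assms in auto)
  show ?thesis unfolding kappa_hat_def[abs_def] by measurable
qed


lemma main_as:
  fixes M :: "'a measure" and Y :: "'a \<Rightarrow> real" and X :: "nat \<Rightarrow> 'a \<Rightarrow> real" and h :: real
  assumes P: "prob_space M"
    and Ym[measurable]: "Y \<in> borel_measurable M"
    and Ypos: "AE x in M. Y x > 0"
    and Yint: "integrable M Y"
    and h: "h > 0"
    and ind: "prob_space.indep_vars M (\<lambda>_. borel) X {1..}"
    and Xm: "\<And>i. i \<ge> 1 \<Longrightarrow> X i \<in> borel_measurable M"
    and dist: "\<And>i. i \<ge> 1 \<Longrightarrow> distr M borel (X i) = distr M borel Y"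
    and Xpos: "AE x in M. \<forall>i. 1 \<le> i \<longrightarrow> 0 < X i x"
    and mu: "integral\<^sup>L M Y \<noteq> 0"
  shows "AE \<omega> in M. (\<lambda>n. kappa_hat X h n \<omega>) \<longlonglongrightarrow> 
     integral\<^sup>L M (\<lambda>x. if h < Y x then Y x else 0) / integral\<^sup>L M Y"
proof -
  interpret prob_space M by (rule P)
  define W where "W i x = max 0 (X i x)" for i x
  define W0 where "W0 x = max 0 (Y x)" for x
  define V where "V i x = (if h < X i x then X i x else 0)" for i x
  define V0 where "V0 x = (if h < Y x then Y x else 0)" for x
  have mW: "nn_iid M W W0"
    unfolding nn_iid_def nn_iid_axioms_def
  proof (intro conjI allI impI)
    show "prob_space M" by (rule P)
    show "indep_vars (\<lambda>_. borel) W {1..}"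
      unfolding W_def by (rule indep_vars_compose2[where Y="\<lambda>_ w. max 0 w", OF ind]) auto
    show "W0 \<in> borel_measurable M" unfolding W0_def by measurable
    show "integrable M W0" unfolding W0_def using Yint by auto
    show "distr M borel (W i) = distr M borel W0" if "1 \<le> i" for i
      unfolding W_def W0_def by (rule distr_comp_eq[where f="\<lambda>w. max 0 w"]) (use that Xm dist in auto)
  qed (auto simp: W_def W0_def)
  have mV: "nn_iid M V V0"
    unfolding nn_iid_def nn_iid_axioms_def
  proof (intro conjI allI impI)
    show "prob_space M" by (rule P)
    show "indep_vars (\<lambda>_. borel) V {1..}"
      unfolding V_def by (rule indep_vars_compose2[where Y="\<lambda>_ w. if h < w then w else 0", OF ind]) auto
    show "V0 \<in> borel_measurable M" unfolding V0_def by measurable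
    show "integrable M V0" unfolding V0_def
      by (rule Bochner_Integration.integrable_bound[OF Yint]) (auto intro!: AE_I2)
    show "distr M borel (V i) = distr M borel V0" if "1 \<le> i" for i
      unfolding V_def V0_def by (rule distr_comp_eq[where f="\<lambda>w. if h < w then w else 0"]) (use that Xm dist in auto)
  qed (use h in \<open>auto simp: V_def V0_def\<close>)
  have EW: "expectation W0 = expectation Y"
  proof -
    have ae: "AE x in M. max 0 (Y x) = Y x" using Ypos by auto
    show ?thesis unfolding W0_def by (rule integral_cong_AE[rotated 2, OF ae]) auto
  qed
  have EV: "expectation V0 = expectation (\<lambda>x. if h < Y x then Y x else 0)"
    unfolding V0_def ..
  show ?thesis
    using nn_iid.slln[OF mW] nn_iid.slln[OF mV] Xpos
  proof eventually_elim
    case (elim x)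
    have l: "(\<lambda>n. ((\<Sum>i=1..n. V i x) / n) / ((\<Sum>i=1..n. W i x) / n)) \<longlonglongrightarrow> expectation V0 / expectation W0"
      using elim(1,2) mu EW by (intro tendsto_divide) auto
    have "eventually (\<lambda>n. ((\<Sum>i=1..n. V i x) / n) / ((\<Sum>i=1..n. W i x) / n) = kappa_hat X h n x) sequentially"
      unfolding eventually_sequentially
    proof (intro exI[of _ 1] allI impI)
      fix n :: nat assume n: "1 \<le> n"
      have "(\<Sum>i=1..n. V i x) = (\<Sum>i=1..n. (if X i x > h then 1 else 0) * X i x)"
        by (intro sum.cong) (auto simp: V_def)
      moreover have "(\<Sum>i=1..n. W i x) = (\<Sum>i=1..n. X i x)"
        using elim(3) by (intro sum.cong) (auto simp: W_def)
      ultimately show "((\<Sum>i=1..n. V i x) / n) / ((\<Sum>i=1..n. W i x) / n) = kappa_hat X h n x"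
        using n by (simp add: kappa_hat_def)
    qed
    from Lim_transform_eventually[OF l this] show ?case using EW EV by simp
  qed
qed


lemma ptwise:
  fixes u s h q :: real
  assumes u: "0 < u" and s: "0 \<le> s" and h: "0 < h" and q: "0 \<le> q" "q < 1"
  shows "u*((if h<u then 1 else 0) - q)/(u+s) \<le> u*((if h<u then 1 else 0) - q) * (1/(h + max 0 s))"
    and "h < u \<Longrightarrow> u*((if h<u then 1 else 0) - q)/(u+s) < u*((if h<u then 1 else 0) - q) * (1/(h + max 0 s))"
proof -
  have ms: "max 0 s = s" using s by simp
  have hs: "0 < h + s" using h s by linarith
  have us: "0 < u + s" using u s by linarith
  have lt: "u*((if h<u then 1 else 0) - q)/(u+s) < u*((if h<u then 1 else 0) - q) * (1/(h + max 0 s))" if hu: "h < u"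
  proof -
    have c: "0 < u * (1 - q)" using u q by simp
    have "u * (1 - q) / (u + s) < u * (1 - q) / (h + s)"
      by (rule divide_strict_left_mono[OF _ c]) (use hu hs us in auto)
    moreover have e: "(if h<u then 1 else (0::real)) = 1" using hu by simp
    ultimately show ?thesis unfolding ms e by simp
  qed
  show "h < u \<Longrightarrow> u*((if h<u then 1 else 0) - q)/(u+s) < u*((if h<u then 1 else 0) - q) * (1/(h + max 0 s))"
    by (rule lt)
  show "u*((if h<u then 1 else 0) - q)/(u+s) \<le> u*((if h<u then 1 else 0) - q) * (1/(h + max 0 s))"
  proof (cases "h < u")
    case True then show ?thesis using lt by (simp add: less_imp_le)
  next
    case False
    have qu: "0 \<le> q * u" using q u by simp
    have "q * u / (h + s) \<le> q * u / (u + s)"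
      by (rule divide_left_mono[OF _ qu]) (use False hs us in auto)
    moreover have e: "(if h<u then 1 else (0::real)) = 0" using False by simp
    ultimately show ?thesis unfolding ms e by (simp add: mult.commute)
  qed
qed

lemma main_strict:
  fixes M :: "'a measure" and Y :: "'a \<Rightarrow> real" and X :: "nat \<Rightarrow> 'a \<Rightarrow> real" and h q :: real
  assumes P: "prob_space M"
    and Ym[measurable]: "Y \<in> borel_measurable M"
    and Yint: "integrable M Y"
    and h: "h > 0"
    and ind: "prob_space.indep_vars M (\<lambda>_. borel) X {1..}"
    and Xm: "\<And>i. i \<ge> 1 \<Longrightarrow> X i \<in> borel_measurable M"
    and dist: "\<And>i. i \<ge> 1 \<Longrightarrow> distr M borel (X i) = distr M borel Y"
    and Xpos: "AE x in M. \<forall>i. 1 \<le> i \<longrightarrow> 0 < X i x"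
    and q0: "0 \<le> q" and q1: "q < 1"
    and mean0: "integral\<^sup>L M (\<lambda>x. if h < Y x then Y x else 0) = q * integral\<^sup>L M Y"
    and PA: "0 < measure M {x\<in>space M. Y x > h}"
    and n: "n \<ge> 1"
  shows "integral\<^sup>L M (kappa_hat X h n) < q"
proof -
  interpret prob_space M by (rule P)
  define f where "f w = w * ((if h < w then 1 else 0) - q)" for w :: real
  define c where "c i x = f (X i x)" for i x
  define S where "S x = (\<Sum>j\<in>{1..n}. X j x)" for x
  define S' where "S' i x = (\<Sum>j\<in>{1..n}-{i}. X j x)" for i x
  define g where "g s = 1/(h + max 0 s)" for s :: real
  have fm[measurable]: "f \<in> borel_measurable borel" unfolding f_def by measurable
  have gm[measurable]: "g \<in> borel_measurable borel" unfolding g_def by measurable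
  have Sm[measurable]: "S \<in> borel_measurable M"
    unfolding S_def by (intro borel_measurable_sum) (use Xm in auto)
  have S'm[measurable]: "S' i \<in> borel_measurable M" for i
    unfolding S'_def by (intro borel_measurable_sum) (use Xm in auto)
  have cm[measurable]: "i \<ge> 1 \<Longrightarrow> c i \<in> borel_measurable M" for i
    unfolding c_def using Xm by measurable
  have gb: "\<bar>g s\<bar> \<le> 1/h" for s
    unfolding g_def using h by (auto simp: field_simps)
  have decomp: "S x = X i x + S' i x" if "i \<in> {1..n}" for i x
    unfolding S_def S'_def using that by (subst sum.remove[of _ i]) auto
  have key: "integral\<^sup>L M (\<lambda>x. c i x / S x) < 0 \<and> integrable M (\<lambda>x. c i x / S x)" if i: "i \<in> {1..n}" for i
  proof -
    have i1: "1 \<le> i" using i by simp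
    have Xim[measurable]: "X i \<in> borel_measurable M" using Xm i1 .
    have cmi[measurable]: "c i \<in> borel_measurable M" using cm i1 .
    have intX: "integrable M (X i)"
      using int_eq_distr(2)[OF Xim Ym _ dist[OF i1], of "\<lambda>w. w"] Yint by simp
    have intc: "integrable M (c i)"
    proof (rule Bochner_Integration.integrable_bound)
      show "integrable M (\<lambda>x. (1+q) * X i x)" using intX by simp
      show "c i \<in> borel_measurable M" using i1 by simp
      show "AE x in M. norm (c i x) \<le> norm ((1+q) * X i x)"
      proof (rule AE_I2)
        fix x
        have a: "\<bar>(if h < X i x then 1 else 0) - q\<bar> \<le> 1 + q" using q0 q1 by auto
        have "\<bar>c i x\<bar> = \<bar>X i x\<bar> * \<bar>(if h < X i x then 1 else 0) - q\<bar>"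
          by (simp add: c_def f_def abs_mult)
        also have "\<dots> \<le> \<bar>X i x\<bar> * (1 + q)" by (rule mult_left_mono[OF a]) simp
        also have "\<dots> = norm ((1+q) * X i x)" using q0 by (simp add: abs_mult)
        finally show "norm (c i x) \<le> norm ((1+q) * X i x)" by simp
      qed
    qed
    have intg: "integrable M (\<lambda>x. g (S' i x))"
      by (rule integrable_const_bound[where B="1/h"]) (auto simp: gb)
    have iv0: "indep_var borel (X i) borel (\<lambda>\<omega>. \<Sum>j\<in>{1..n}-{i}. X j \<omega>)"
    proof (rule indep_vars_sum)
      have "insert i ({1..n}-{i}) = {1..n}" using i by auto
      then show "indep_vars (\<lambda>_. borel) X (insert i ({1..n} - {i}))"
        using indep_vars_subset[OF ind] by auto
    qed auto
    have iv: "indep_var borel (c i) borel (\<lambda>x. g (S' i x))"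
      using indep_var_compose[OF iv0 fm gm] by (simp add: comp_def c_def[abs_def] S'_def[abs_def])
    have intV: "integrable M (\<lambda>x. if h < Y x then Y x else 0)"
    proof (rule Bochner_Integration.integrable_bound[OF Yint])
      show "(\<lambda>x. if h < Y x then Y x else 0) \<in> borel_measurable M" by measurable
      show "AE x in M. norm (if h < Y x then Y x else 0) \<le> norm (Y x)" by (rule AE_I2) simp
    qed
    have Ec: "integral\<^sup>L M (c i) = 0"
    proof -
      have "integral\<^sup>L M (c i) = integral\<^sup>L M (\<lambda>x. f (Y x))"
        unfolding c_def by (rule int_eq_distr(1)[OF Xim Ym fm dist[OF i1]])
      also have "\<dots> = integral\<^sup>L M (\<lambda>x. (if h < Y x then Y x else 0) - q * Y x)"
        by (rule Bochner_Integration.integral_cong) (auto simp: f_def algebra_simps)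
      also have "\<dots> = integral\<^sup>L M (\<lambda>x. if h < Y x then Y x else 0) - integral\<^sup>L M (\<lambda>x. q * Y x)"
        by (rule Bochner_Integration.integral_diff[OF intV]) (use Yint in simp)
      also have "\<dots> = 0" using mean0 by simp
      finally show ?thesis .
    qed
    have E0: "integral\<^sup>L M (\<lambda>x. c i x * g (S' i x)) = 0"
      using indep_var_lebesgue_integral[OF iv intc intg] Ec by simp
    have intcg: "integrable M (\<lambda>x. c i x * g (S' i x))"
      using indep_var_integrable[OF iv intc intg] .
    have AEp: "AE x in M. c i x / S x \<le> c i x * g (S' i x) \<and> (h < X i x \<longrightarrow> c i x / S x < c i x * g (S' i x))
                 \<and> \<bar>c i x / S x\<bar> \<le> 1 + q"
      using Xpos
    proof eventually_elim
      case (elim x)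
      have u: "0 < X i x" using elim i1 by simp
      have s: "0 \<le> S' i x" unfolding S'_def using elim by (intro sum_nonneg) (auto intro: less_imp_le)
      have Sx: "S x = X i x + S' i x" using decomp[OF i] .
      have bnd: "\<bar>c i x / S x\<bar> \<le> 1 + q"
      proof -
        have a: "\<bar>(if h < X i x then 1 else 0) - q\<bar> \<le> 1 + q" using q0 q1 by auto
        have "\<bar>c i x\<bar> = \<bar>X i x\<bar> * \<bar>(if h < X i x then 1 else 0) - q\<bar>"
          by (simp add: c_def f_def abs_mult)
        also have "\<dots> \<le> \<bar>X i x\<bar> * (1 + q)" by (rule mult_left_mono[OF a]) simp
        also have "\<dots> = X i x * (1 + q)" using u by simp
        also have "\<dots> \<le> S x * (1 + q)" using Sx s q0 by (intro mult_right_mono) auto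
        finally have cS: "\<bar>c i x\<bar> \<le> S x * (1 + q)" .
        have Sp: "0 < S x" using Sx s u by linarith
        have "\<bar>c i x / S x\<bar> = \<bar>c i x\<bar> / S x" using Sp by (simp add: abs_divide)
        also have "\<dots> \<le> 1 + q" using cS Sp by (simp add: pos_divide_le_eq mult.commute)
        finally show ?thesis .
      qed
      show ?case
        using ptwise[OF u s h q0 q1] bnd unfolding c_def f_def g_def Sx by simp
    qed
    have b: "AE x in M. norm (c i x / S x) \<le> 1+q" using AEp by eventually_elim simp
    have intcS: "integrable M (\<lambda>x. c i x / S x)"
      by (rule integrable_const_bound[OF b]) simp
    have ae1: "AE x in M. x \<in> {x\<in>space M. h < X i x} \<longrightarrow> c i x / S x \<noteq> c i x * g (S' i x)"
      using AEp by eventually_elim auto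
    have ae2: "AE x in M. c i x / S x \<le> c i x * g (S' i x)"
      using AEp by eventually_elim auto
    have em: "emeasure M {x\<in>space M. h < X i x} \<noteq> 0"
    proof -
      have "measure M {x\<in>space M. h < X i x} = measure (distr M borel (X i)) {h<..}"
        by (subst measure_distr) (auto simp: vimage_def Int_def conj_commute)
      also have "\<dots> = measure (distr M borel Y) {h<..}" using dist[OF i1] by simp
      also have "\<dots> = measure M {x\<in>space M. Y x > h}"
        by (subst measure_distr) (auto simp: vimage_def Int_def conj_commute)
      finally show ?thesis using PA by (simp add: emeasure_eq_measure)
    qed
    have As: "{x\<in>space M. h < X i x} \<in> sets M" by measurable
    have "integral\<^sup>L M (\<lambda>x. c i x / S x) < integral\<^sup>L M (\<lambda>x. c i x * g (S' i x))"
      by (rule integral_less_AE[OF intcS intcg em As ae1 ae2])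
    then show ?thesis using E0 intcS by simp
  qed
  have AEsum: "AE x in M. kappa_hat X h n x = (\<Sum>i\<in>{1..n}. c i x / S x) + q"
    using Xpos
  proof eventually_elim
    case (elim x)
    have Spos: "0 < S x" unfolding S_def using elim n
      by (intro sum_pos) auto
    have "kappa_hat X h n x = (\<Sum>i\<in>{1..n}. (if h < X i x then 1 else 0) * X i x) / S x"
      by (simp add: kappa_hat_def S_def)
    also have "(\<Sum>i\<in>{1..n}. (if h < X i x then 1 else 0) * X i x) = (\<Sum>i\<in>{1..n}. c i x) + q * S x"
      by (simp add: c_def f_def S_def sum.distrib[symmetric] sum_distrib_left algebra_simps)
    also have "((\<Sum>i\<in>{1..n}. c i x) + q * S x) / S x = (\<Sum>i\<in>{1..n}. c i x / S x) + q"
      using Spos by (simp add: add_divide_distrib sum_divide_distrib)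
    finally show ?case .
  qed
  have isum: "integrable M (\<lambda>x. \<Sum>i\<in>{1..n}. c i x / S x)"
    by (rule Bochner_Integration.integrable_sum[where f="\<lambda>i x. c i x / S x"]) (use key in blast)
  have intsum: "integrable M (\<lambda>x. (\<Sum>i\<in>{1..n}. c i x / S x) + q)"
    using isum by simp
  have kmeas: "kappa_hat X h n \<in> borel_measurable M" by (rule kappa_hat_meas[OF Xm])
  have "integral\<^sup>L M (kappa_hat X h n) = integral\<^sup>L M (\<lambda>x. (\<Sum>i\<in>{1..n}. c i x / S x) + q)"
    by (rule integral_cong_AE[OF kmeas _ AEsum]) (use intsum in auto)
  also have "\<dots> = integral\<^sup>L M (\<lambda>x. \<Sum>i\<in>{1..n}. c i x / S x) + integral\<^sup>L M (\<lambda>x. q)"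
    by (rule Bochner_Integration.integral_add[OF isum]) simp
  also have "\<dots> = (\<Sum>i\<in>{1..n}. integral\<^sup>L M (\<lambda>x. c i x / S x)) + q"
    by (subst Bochner_Integration.integral_sum[where f="\<lambda>i x. c i x / S x"]) (use key prob_space in auto)
  also have "\<dots> < (\<Sum>i\<in>{1..n}. (0::real)) + q"
    using key n by (intro add_strict_right_mono sum_strict_mono) auto
  finally show ?thesis by simp
qed


lemma AE_conv_prob:
  fixes f :: "nat \<Rightarrow> 'a \<Rightarrow> real"
  assumes P: "prob_space M" and fm: "\<And>n. f n \<in> borel_measurable M"
    and lim: "AE x in M. (\<lambda>n. f n x) \<longlonglongrightarrow> L" and e: "e > 0"
  shows "(\<lambda>n. measure M {x\<in>space M. e < \<bar>f n x - L\<bar>}) \<longlonglongrightarrow> 0"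
proof -
  interpret prob_space M by (rule P)
  define s where "s n x = (indicator {x\<in>space M. e < \<bar>f n x - L\<bar>} x :: real)" for n x
  have sm: "s n \<in> borel_measurable M" for n
    unfolding s_def using fm[of n] by measurable
  have "(\<lambda>n. integral\<^sup>L M (s n)) \<longlonglongrightarrow> integral\<^sup>L M (\<lambda>x. 0::real)"
  proof (rule integral_dominated_convergence[where w="\<lambda>_. 1"])
    show "(\<lambda>x. 0::real) \<in> borel_measurable M" by simp
    show "s n \<in> borel_measurable M" for n by (rule sm)
    show "integrable M (\<lambda>_. 1::real)" by simp
    show "AE x in M. (\<lambda>n. s n x) \<longlonglongrightarrow> 0" using lim
    proof eventually_elim
      case (elim x)
      then have "eventually (\<lambda>n. dist (f n x) L < e) sequentially"
        using e by (rule tendstoD)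
      then have "eventually (\<lambda>n. s n x = 0) sequentially"
        by eventually_elim (auto simp: s_def dist_real_def)
      then show ?case by (rule tendsto_eventually)
    qed
    show "AE x in M. norm (s n x) \<le> 1" for n by (rule AE_I2) (simp add: s_def)
  qed
  moreover have "integral\<^sup>L M (s n) = measure M {x\<in>space M. e < \<bar>f n x - L\<bar>}" for n
  proof -
    have "integral\<^sup>L M (s n) = integral\<^sup>L M (indicator {x\<in>space M. e < \<bar>f n x - L\<bar>} :: _ \<Rightarrow> real)"
      by (simp add: s_def[abs_def])
    also have "\<dots> = measure M {x\<in>space M. e < \<bar>f n x - L\<bar>}"
      by (simp add: Int_absorb2 subset_iff)
    finally show ?thesis .
  qed
  ultimately show ?thesis by simp
qed

theorem theorem2:
  fixes M :: "'a measure" and Y :: "'a \<Rightarrow> real" and X :: "nat \<Rightarrow> 'a \<Rightarrow> real" and h :: real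
  assumes "prob_space M"
    and "Y \<in> borel_measurable M"
    and "AE x in M. Y x > 0"
    and "integrable M Y"
    and "h > 0"
    and "0 < measure M {x\<in>space M. Y x > h}" and "measure M {x\<in>space M. Y x > h} < 1"
    and "prob_space.indep_vars M (\<lambda>_. borel) X {1..}"
    and "\<And>i. i \<ge> 1 \<Longrightarrow> X i \<in> borel_measurable M"
    and "\<And>i. i \<ge> 1 \<Longrightarrow> distr M borel (X i) = distr M borel Y"
  shows "(\<forall>n\<ge>1. (\<integral>\<omega>. kappa_hat X h n \<omega> \<partial>M) < kappa M Y h)
       \<and> (AE \<omega> in M. (\<lambda>n. kappa_hat X h n \<omega>) \<longlonglongrightarrow> kappa M Y h)
       \<and> (\<forall>\<epsilon>>0. (\<lambda>n. measure M {\<omega>\<in>space M. \<bar>kappa_hat X h n \<omega> - kappa M Y h\<bar> > \<epsilon>})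
                    \<longlonglongrightarrow> 0)"
proof -
  note P = assms(1) and Ym[measurable] = assms(2) and Ypos = assms(3) and Yint = assms(4)
    and h = assms(5) and PA = assms(6) and PA1 = assms(7) and ind = assms(8)
    and Xm = assms(9) and dist = assms(10)
  interpret prob_space M by (rule P)
  define \<mu> where "\<mu> = integral\<^sup>L M Y"
  define \<nu> where "\<nu> = integral\<^sup>L M (\<lambda>x. if h < Y x then Y x else 0)"
  have Vm[measurable]: "(\<lambda>x. if h < Y x then Y x else 0) \<in> borel_measurable M" by measurable
  have intV: "integrable M (\<lambda>x. if h < Y x then Y x else 0)"
  proof (rule Bochner_Integration.integrable_bound[OF Yint])
    show "(\<lambda>x. if h < Y x then Y x else 0) \<in> borel_measurable M" by measurable
    show "AE x in M. norm (if h < Y x then Y x else 0) \<le> norm (Y x)" by (rule AE_I2) simp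
  qed
  have kap: "kappa M Y h = \<nu> / \<mu>"
  proof -
    have "integral\<^sup>L M (\<lambda>x. Y x * indicator {x\<in>space M. Y x > h} x) = \<nu>"
      unfolding \<nu>_def by (rule Bochner_Integration.integral_cong) (auto simp: indicator_def)
    then show ?thesis unfolding kappa_def \<mu>_def by simp
  qed
  have Xpos: "AE x in M. \<forall>i. 1 \<le> i \<longrightarrow> 0 < X i x"
  proof (subst AE_all_countable, intro allI)
    fix i :: nat
    show "AE x in M. 1 \<le> i \<longrightarrow> 0 < X i x"
    proof (cases "1 \<le> i")
      case True
      have "AE x in M. 0 < X i x"
        by (rule AE_eq_distr[OF Xm[OF True] Ym _ dist[OF True] Ypos]) simp
      then show ?thesis by auto
    qed simp
  qed
  have mupos: "0 < \<mu>"
  proof -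
    have "integral\<^sup>L M (\<lambda>_. 0::real) < integral\<^sup>L M Y"
      by (rule integral_less_AE_space) (use Yint Ypos in \<open>auto simp: emeasure_space_1\<close>)
    then show ?thesis by (simp add: \<mu>_def)
  qed
  have nu0: "0 \<le> \<nu>" unfolding \<nu>_def using h by (intro Bochner_Integration.integral_nonneg) auto
  have numu: "\<nu> < \<mu>"
  proof -
    define A where "A = {x\<in>space M. Y x \<le> h}"
    have As: "A \<in> sets M" unfolding A_def by measurable
    have "prob A = 1 - prob {x\<in>space M. Y x > h}"
    proof -
      have "A = space M - {x\<in>space M. Y x > h}" unfolding A_def by auto
      then show ?thesis by (simp add: prob_compl)
    qed
    then have "prob A > 0" using PA1 by simp
    then have em: "emeasure M A \<noteq> 0" by (simp add: emeasure_eq_measure)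
    have ae1: "AE x in M. x \<in> A \<longrightarrow> (if h < Y x then Y x else 0) \<noteq> Y x"
      using Ypos by eventually_elim (auto simp: A_def)
    have ae2: "AE x in M. (if h < Y x then Y x else 0) \<le> Y x"
      using Ypos by eventually_elim auto
    show ?thesis unfolding \<nu>_def \<mu>_def
      by (rule integral_less_AE[OF intV Yint em As ae1 ae2])
  qed
  define q where "q = \<nu> / \<mu>"
  have q0: "0 \<le> q" unfolding q_def using nu0 mupos by simp
  have q1: "q < 1" unfolding q_def using numu mupos by simp
  have mean0: "integral\<^sup>L M (\<lambda>x. if h < Y x then Y x else 0) = q * integral\<^sup>L M Y"
    unfolding q_def \<nu>_def[symmetric] \<mu>_def[symmetric] using mupos by simp
  have part1: "\<forall>n\<ge>1. (\<integral>\<omega>. kappa_hat X h n \<omega> \<partial>M) < kappa M Y h"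
  proof (intro allI impI)
    fix n :: nat assume n: "1 \<le> n"
    have "integral\<^sup>L M (kappa_hat X h n) < q"
      by (rule main_strict[OF P Ym Yint h ind Xm dist Xpos q0 q1 mean0 PA n])
    then show "(\<integral>\<omega>. kappa_hat X h n \<omega> \<partial>M) < kappa M Y h" using kap q_def by simp
  qed
  have part2: "AE \<omega> in M. (\<lambda>n. kappa_hat X h n \<omega>) \<longlonglongrightarrow> kappa M Y h"
    using main_as[OF P Ym Ypos Yint h ind Xm dist Xpos] mupos kap
    unfolding \<nu>_def \<mu>_def by simp
  have part3: "\<forall>\<epsilon>>0. (\<lambda>n. measure M {\<omega>\<in>space M. \<bar>kappa_hat X h n \<omega> - kappa M Y h\<bar> > \<epsilon>}) \<longlonglongrightarrow> 0"
  proof (intro allI impI)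
    fix \<epsilon> :: real assume e: "\<epsilon> > 0"
    show "(\<lambda>n. measure M {\<omega>\<in>space M. \<bar>kappa_hat X h n \<omega> - kappa M Y h\<bar> > \<epsilon>}) \<longlonglongrightarrow> 0"
      by (rule AE_conv_prob[OF P kappa_hat_meas[OF Xm] part2 e])
  qed
  show ?thesis using part1 part2 part3 by blast
qed

end
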